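(* Let $n\geq 6$ and $p\geq 2$. Then $\rho(\mathbf{S}_{p}(B_{3}))<\rho(\mathbf{S}_{p}(B_{2}))$.
   Context: All graphs are simple and connected; $d_i$ is the degree of $v_i$. The $p$-Sombor matrix $\mathbf{S}_{p}(G)$ has $(i,j)$-entry $(d_i^{p}+d_j^{p})^{1/p}$ if $v_iv_j\in E(G)$ and $0$ otherwise; $\rho(\mathbf{S}_{p}(G))$ is its largest eigenvalue. $B_2$ is the graph of order $n$ consisting of two triangles sharing exactly one vertex $c$, with $n-5$ pendant vertices attached to $c$. $B_3$ is the graph of order $n$ obtained from $K_4$ minus an edge (with adjacent degree-3 vertices $u,v$) by attaching $n-5$ pendant vertices to $u$ and one pendant vertex to $v$. *)

theory Defs
  imports "Jordan_Normal_Form.Matrix" "Jordan_Normal_Form.Char_Poly"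
begin

text \<open>Simple graphs on the vertex set {0..<n}, given by a symmetric irreflexive
adjacency predicate. Degree of vertex i: number of neighbours in {0..<n}.\<close>

definition deg :: "nat \<Rightarrow> (nat \<Rightarrow> nat \<Rightarrow> bool) \<Rightarrow> nat \<Rightarrow> nat" where
  "deg n adj i = card {j \<in> {0..<n}. adj i j}"

definition sombor_mat :: "real \<Rightarrow> nat \<Rightarrow> (nat \<Rightarrow> nat \<Rightarrow> bool) \<Rightarrow> real mat" where
  "sombor_mat p n adj = mat n n (\<lambda>(i,j). if adj i j
      then (real (deg n adj i) powr p + real (deg n adj j) powr p) powr (1 / p) else 0)"

definition rho :: "real mat \<Rightarrow> real" where
  "rho A = Max {k. eigenvalue A k}"

definition sym_edge :: "nat \<Rightarrow> nat \<Rightarrow> (nat \<times> nat) set \<Rightarrow> bool" where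
  "sym_edge i j E = ((i, j) \<in> E \<or> (j, i) \<in> E)"

text \<open>B2 on {0..<n}: centre c = 0, triangles {0,1,2} and {0,3,4}, pendant
vertices 5,...,n-1 attached to 0.\<close>
definition B2_adj :: "nat \<Rightarrow> nat \<Rightarrow> nat \<Rightarrow> bool" where
  "B2_adj n i j = (i < n \<and> j < n \<and>
     sym_edge i j ({(0,1),(0,2),(1,2),(0,3),(0,4),(3,4)} \<union> {(0,k) | k. 5 \<le> k \<and> k < n}))"

text \<open>B3 on {0..<n}: K4 minus the edge 2-3 on {0,1,2,3}, with u = 0, v = 1 the
adjacent degree-3 vertices; pendant vertex 4 attached to v = 1 and pendant
vertices 5,...,n-1 (n-5 of them) attached to u = 0.\<close>
definition B3_adj :: "nat \<Rightarrow> nat \<Rightarrow> nat \<Rightarrow> bool" where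
  "B3_adj n i j = (i < n \<and> j < n \<and>
     sym_edge i j ({(0,1),(0,2),(0,3),(1,2),(1,3),(1,4)} \<union> {(0,k) | k. 5 \<le> k \<and> k < n}))"

end

theory Submission
  imports Defs
begin

definition Fp :: "real \<Rightarrow> real \<Rightarrow> real \<Rightarrow> real" where
  "Fp p x y = (x powr p + y powr p) powr (1/p)"

lemma Fp_sym: "Fp p x y = Fp p y x" unfolding Fp_def by (simp add: add.commute)

lemma sombor_entry: "i < n \<Longrightarrow> j < n \<Longrightarrow> sombor_mat p n adj $$ (i,j) =
   (if adj i j then Fp p (real (deg n adj i)) (real (deg n adj j)) else 0)"
  unfolding sombor_mat_def Fp_def by simp

lemma B2_adj_iff: "n \<ge> 5 \<Longrightarrow> B2_adj n i j = (i<n \<and> j<n \<and> ((i=0 \<and> j\<noteq>0) \<or> (j=0 \<and> i\<noteq>0)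
   \<or> (i=1\<and>j=2) \<or> (i=2\<and>j=1) \<or> (i=3\<and>j=4) \<or> (i=4\<and>j=3)))"
  unfolding B2_adj_def sym_edge_def by simp presburger

lemma B3_adj_iff: "n \<ge> 5 \<Longrightarrow> B3_adj n i j = (i<n \<and> j<n \<and> ((i=0 \<and> j\<noteq>0 \<and> j\<noteq>4) \<or> (j=0 \<and> i\<noteq>0 \<and> i\<noteq>4)
   \<or> (i=1\<and>(j=2\<or>j=3\<or>j=4)) \<or> (j=1\<and>(i=2\<or>i=3\<or>i=4))))"
  unfolding B3_adj_def sym_edge_def by simp presburger

lemma deg_B2:
  assumes n: "n \<ge> 5" and i: "i < n"
  shows "deg n (B2_adj n) i = (if i = 0 then n - 1 else if i \<le> 4 then 2 else 1)"
proof -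
  consider "i = 0" | "i = 1" | "i = 2" | "i = 3" | "i = 4" | "i \<ge> 5" by linarith
  then show ?thesis
  proof cases
    case 1
    have "{j \<in> {0..<n}. B2_adj n i j} = {1..<n}" using n i 1 by (auto simp: B2_adj_iff)
    thus ?thesis using 1 unfolding deg_def by simp
  next
    case 2
    have "{j \<in> {0..<n}. B2_adj n i j} = {0,2}" using n i 2 by (auto simp: B2_adj_iff)
    thus ?thesis using 2 unfolding deg_def by simp
  next
    case 3
    have "{j \<in> {0..<n}. B2_adj n i j} = {0,1}" using n i 3 by (auto simp: B2_adj_iff)
    thus ?thesis using 3 unfolding deg_def by simp
  next
    case 4
    have "{j \<in> {0..<n}. B2_adj n i j} = {0,4}" using n i 4 by (auto simp: B2_adj_iff)
    thus ?thesis using 4 unfolding deg_def by simp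
  next
    case 5
    have "{j \<in> {0..<n}. B2_adj n i j} = {0,3}" using n i 5 by (auto simp: B2_adj_iff)
    thus ?thesis using 5 unfolding deg_def by simp
  next
    case 6
    have "{j \<in> {0..<n}. B2_adj n i j} = {0}" using n i 6 by (auto simp: B2_adj_iff)
    thus ?thesis using 6 unfolding deg_def by simp
  qed
qed

lemma deg_B3:
  assumes n: "n \<ge> 5" and i: "i < n"
  shows "deg n (B3_adj n) i = (if i = 0 then n - 2 else if i = 1 then 4 else if i \<le> 3 then 2 else 1)"
proof -
  consider "i = 0" | "i = 1" | "i = 2" | "i = 3" | "i = 4" | "i \<ge> 5" by linarith
  then show ?thesis
  proof cases
    case 1
    have "{j \<in> {0..<n}. B3_adj n i j} = {1..<n} - {4}" using n i 1 by (auto simp: B3_adj_iff)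
    thus ?thesis using 1 n unfolding deg_def by simp
  next
    case 2
    have "{j \<in> {0..<n}. B3_adj n i j} = {0,2,3,4}" using n i 2 by (auto simp: B3_adj_iff)
    thus ?thesis using 2 unfolding deg_def by simp
  next
    case 3
    have "{j \<in> {0..<n}. B3_adj n i j} = {0,1}" using n i 3 by (auto simp: B3_adj_iff)
    thus ?thesis using 3 unfolding deg_def by simp
  next
    case 4
    have "{j \<in> {0..<n}. B3_adj n i j} = {0,1}" using n i 4 by (auto simp: B3_adj_iff)
    thus ?thesis using 4 unfolding deg_def by simp
  next
    case 5
    have "{j \<in> {0..<n}. B3_adj n i j} = {1}" using n i 5 by (auto simp: B3_adj_iff)
    thus ?thesis using 5 unfolding deg_def by simp
  next
    case 6
    have "{j \<in> {0..<n}. B3_adj n i j} = {0}" using n i 6 by (auto simp: B3_adj_iff)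
    thus ?thesis using 6 unfolding deg_def by simp
  qed
qed

lemma sum_split5: fixes n :: nat shows "n \<ge> 5 \<Longrightarrow> (\<Sum>j<n. f j) = f 0 + f 1 + f 2 + f 3 + f 4 + (\<Sum>j\<in>{5..<n}. f j)"
proof -
  assume n: "n \<ge> 5"
  have "{..<n} = {..<5} \<union> {5..<n}" using n by auto
  hence "(\<Sum>j<n. f j) = (\<Sum>j<5. f j) + (\<Sum>j\<in>{5..<n}. f j)"
    by (metis (no_types, lifting) sum.union_disjoint finite_lessThan finite_atLeastLessThan
        disjoint_iff atLeastLessThan_iff lessThan_iff not_less)
  thus ?thesis by (simp add: numeral_eq_Suc add.assoc)
qed


lemma B2_S:
  assumes n: "n \<ge> 5" and i: "i < n" and j: "j < n"
  shows "sombor_mat p n (B2_adj n) $$ (i,j) = (if B2_adj n i j then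
     (if i = 0 \<or> j = 0 then (if i \<le> 4 \<and> j \<le> 4 then Fp p (real (n-1)) 2 else Fp p (real (n-1)) 1)
      else Fp p 2 2) else 0)"
proof (cases "B2_adj n i j")
  case False thus ?thesis using sombor_entry[OF i j] by simp
next
  case True
  note adj = True[unfolded B2_adj_iff[OF n]]
  have "Fp p (real (deg n (B2_adj n) i)) (real (deg n (B2_adj n) j)) =
     (if i = 0 \<or> j = 0 then (if i \<le> 4 \<and> j \<le> 4 then Fp p (real (n-1)) 2 else Fp p (real (n-1)) 1)
      else Fp p 2 2)"
    using adj deg_B2[OF n i] deg_B2[OF n j] by (auto intro: Fp_sym)
  thus ?thesis using sombor_entry[OF i j] True by simp
qed

lemma B3_S:
  assumes n: "n \<ge> 5" and i: "i < n" and j: "j < n"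
  shows "sombor_mat p n (B3_adj n) $$ (i,j) = (if B3_adj n i j then
     (if i = 0 \<or> j = 0 then (if i = 1 \<or> j = 1 then Fp p (real (n-2)) 4
        else if i \<le> 3 \<and> j \<le> 3 then Fp p (real (n-2)) 2 else Fp p (real (n-2)) 1)
      else (if i = 4 \<or> j = 4 then Fp p 4 1 else Fp p 4 2)) else 0)"
proof (cases "B3_adj n i j")
  case False thus ?thesis using sombor_entry[OF i j] by simp
next
  case True
  note adj = True[unfolded B3_adj_iff[OF n]]
  have "Fp p (real (deg n (B3_adj n) i)) (real (deg n (B3_adj n) j)) =
     (if i = 0 \<or> j = 0 then (if i = 1 \<or> j = 1 then Fp p (real (n-2)) 4
        else if i \<le> 3 \<and> j \<le> 3 then Fp p (real (n-2)) 2 else Fp p (real (n-2)) 1)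
      else (if i = 4 \<or> j = 4 then Fp p 4 1 else Fp p 4 2))"
    using adj deg_B3[OF n i] deg_B3[OF n j] by (auto intro: Fp_sym)
  thus ?thesis using sombor_entry[OF i j] True by simp
qed
lemma collatz:
  fixes A :: "real mat"
  assumes A: "A \<in> carrier_mat n n"
    and nn: "\<And>i j. i<n \<Longrightarrow> j<n \<Longrightarrow> A$$(i,j) \<ge> 0"
    and wpos: "\<And>i. i<n \<Longrightarrow> w i > 0"
    and rows: "\<And>i. i<n \<Longrightarrow> (\<Sum>j<n. A$$(i,j) * w j) \<le> U * w i"
    and ev: "eigenvalue A k"
  shows "k \<le> U"
proof -
  from ev obtain v where v: "v \<in> carrier_vec n" "v \<noteq> 0\<^sub>v n" "A *\<^sub>v v = k \<cdot>\<^sub>v v"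
    unfolding eigenvalue_def eigenvector_def using A by auto
  have dv: "dim_vec v = n" using v by auto
  obtain i1 where i1: "i1 < n" "v$i1 \<noteq> 0"
    using v(2) dv by (metis eq_vecI index_zero_vec(1) index_zero_vec(2))
  define M where "M = Max ((\<lambda>i. \<bar>v$i\<bar> / w i) ` {..<n})"
  have fin: "finite ((\<lambda>i. \<bar>v$i\<bar> / w i) ` {..<n})" by auto
  have ne: "((\<lambda>i. \<bar>v$i\<bar> / w i) ` {..<n}) \<noteq> {}" using i1 by auto
  obtain i0 where i0: "i0 < n" "M = \<bar>v$i0\<bar> / w i0"
    using Max_in[OF fin ne] unfolding M_def by auto
  have Mge: "\<bar>v$j\<bar> \<le> M * w j" if "j < n" for j
  proof -
    have "\<bar>v$j\<bar> / w j \<le> M" unfolding M_def using fin that by auto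
    thus ?thesis using wpos[OF that] by (simp add: divide_le_eq)
  qed
  have Mpos: "M > 0"
  proof -
    have "\<bar>v$i1\<bar> / w i1 \<le> M" unfolding M_def using fin i1 by auto
    moreover have "\<bar>v$i1\<bar> / w i1 > 0" using i1 wpos[of i1] by auto
    ultimately show ?thesis by linarith
  qed
  have vi0: "\<bar>v$i0\<bar> = M * w i0" using i0 wpos[OF i0(1)] by auto
  have row: "(\<Sum>j<n. A$$(i0,j) * v$j) = k * v$i0"
  proof -
    have "(A *\<^sub>v v) $ i0 = (k \<cdot>\<^sub>v v) $ i0" using v(3) by simp
    thus ?thesis using A i0(1) dv
      by (auto simp: mult_mat_vec_def scalar_prod_def lessThan_atLeast0 intro!: sum.cong)
  qed
  have "\<bar>k\<bar> * \<bar>v$i0\<bar> = \<bar>\<Sum>j<n. A$$(i0,j) * v$j\<bar>" using row by (simp add: abs_mult)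
  also have "\<dots> \<le> (\<Sum>j<n. \<bar>A$$(i0,j) * v$j\<bar>)" by (rule sum_abs)
  also have "\<dots> \<le> (\<Sum>j<n. A$$(i0,j) * (M * w j))"
  proof (rule sum_mono)
    fix j assume "j \<in> {..<n}"
    hence j: "j < n" by auto
    show "\<bar>A$$(i0,j) * v$j\<bar> \<le> A$$(i0,j) * (M * w j)"
      using nn[OF i0(1) j] Mge[OF j] by (simp add: abs_mult mult_left_mono)
  qed
  also have "\<dots> = M * (\<Sum>j<n. A$$(i0,j) * w j)"
    by (simp add: sum_distrib_left algebra_simps)
  also have "\<dots> \<le> M * (U * w i0)" using rows[OF i0(1)] Mpos by simp
  also have "\<dots> = U * \<bar>v$i0\<bar>" using vi0 by simp
  finally have "\<bar>k\<bar> * \<bar>v$i0\<bar> \<le> U * \<bar>v$i0\<bar>" .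
  moreover have "\<bar>v$i0\<bar> > 0" using vi0 Mpos wpos[OF i0(1)] by simp
  ultimately have "\<bar>k\<bar> \<le> U" by simp
  thus ?thesis by simp
qed

lemma eig_finite:
  fixes A :: "real mat"
  assumes A: "A \<in> carrier_mat n n"
  shows "finite {k. eigenvalue A k}"
proof -
  have "char_poly A \<noteq> 0" using degree_monic_char_poly[OF A] by auto
  hence "finite {k. poly (char_poly A) k = 0}" by (rule poly_roots_finite)
  thus ?thesis using eigenvalue_root_char_poly[OF A] by simp
qed

lemma rho_ge:
  fixes A :: "real mat"
  assumes A: "A \<in> carrier_mat n n" and "eigenvalue A k"
  shows "k \<le> rho A"
  unfolding rho_def using eig_finite[OF A] assms(2) by (auto intro: Max_ge)

lemma rho_le:
  fixes A :: "real mat"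
  assumes A: "A \<in> carrier_mat n n" and "eigenvalue A k0" and "\<And>k. eigenvalue A k \<Longrightarrow> k \<le> U"
  shows "rho A \<le> U"
  unfolding rho_def using eig_finite[OF A] assms(2,3) by (subst Max_le_iff) auto


lemma sombor_carrier: "sombor_mat p n adj \<in> carrier_mat n n"
  unfolding sombor_mat_def by simp

lemma mat_vec_row: "A \<in> carrier_mat n n \<Longrightarrow> dim_vec v = n \<Longrightarrow> i < n \<Longrightarrow>
   (A *\<^sub>v v) $ i = (\<Sum>j<n. A$$(i,j) * v$j)"
  by (auto simp: mult_mat_vec_def scalar_prod_def lessThan_atLeast0 intro!: sum.cong)

lemma eigenvalueI:
  fixes A :: "real mat"
  assumes A: "A \<in> carrier_mat n n" and dv: "dim_vec v = n" and i0: "i0 < n" "v$i0 \<noteq> 0"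
    and row: "\<And>i. i < n \<Longrightarrow> (\<Sum>j<n. A$$(i,j) * v$j) = l * v$i"
  shows "eigenvalue A l"
proof -
  have "A *\<^sub>v v = l \<cdot>\<^sub>v v"
  proof (rule eq_vecI)
    show "dim_vec (A *\<^sub>v v) = dim_vec (l \<cdot>\<^sub>v v)" using A dv by simp
    fix i assume "i < dim_vec (l \<cdot>\<^sub>v v)"
    hence i: "i < n" using dv by simp
    show "(A *\<^sub>v v) $ i = (l \<cdot>\<^sub>v v) $ i"
      using mat_vec_row[OF A dv i] row[OF i] i dv by simp
  qed
  moreover have "v \<noteq> 0\<^sub>v n"
  proof
    assume "v = 0\<^sub>v n" hence "v$i0 = 0" using i0 by simp
    thus False using i0 by simp
  qed
  ultimately show ?thesis unfolding eigenvalue_def eigenvector_def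
    using dv A by (auto intro!: exI[of _ v])
qed

lemma B2_eig:
  fixes n :: nat and p l a b c :: real
  defines "a \<equiv> Fp p (real (n-1)) 2" and "b \<equiv> Fp p (real (n-1)) 1" and "c \<equiv> Fp p 2 2"
  assumes n: "n \<ge> 6" and lc: "l > c" and l0: "l > 0"
    and eq: "l^2 * (l - c) = 4*a^2*l + (n-5)*b^2*(l-c)"
  shows "eigenvalue (sombor_mat p n (B2_adj n)) l"
proof -
  let ?S = "sombor_mat p n (B2_adj n)"
  define v where "v = vec n (\<lambda>i. if i=0 then 1 else if i\<le>4 then a/(l-c) else b/l)"
  have dv: "dim_vec v = n" unfolding v_def by simp
  have vi: "\<And>i. i < n \<Longrightarrow> v$i = (if i=0 then 1 else if i\<le>4 then a/(l-c) else b/l)"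
    unfolding v_def by simp
  have n5: "n \<ge> 5" using n by simp
  have S: "\<And>i j. i<n \<Longrightarrow> j<n \<Longrightarrow> ?S $$ (i,j) = (if B2_adj n i j then
     (if i = 0 \<or> j = 0 then (if i \<le> 4 \<and> j \<le> 4 then a else b) else c) else 0)"
    unfolding a_def b_def c_def by (rule B2_S[OF n5])
  have lcne: "l - c \<noteq> 0" using lc by simp
  have row: "(\<Sum>j<n. ?S$$(i,j) * v$j) = l * v$i" if i: "i < n" for i
  proof -
    consider "i = 0" | "i \<ge> 1" "i \<le> 4" | "i \<ge> 5" by linarith
    then show ?thesis
    proof cases
      case 1
      have tail: "(\<Sum>j\<in>{5..<n}. ?S$$(i,j) * v$j) = (\<Sum>j\<in>{5..<n}. b * (b / l))"
        using 1 by (intro sum.cong) (auto simp: S vi B2_adj_iff[OF n5])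
      have "(\<Sum>j<n. ?S$$(i,j) * v$j) = 4 * (a * (a/(l-c))) + (n-5) * (b * (b/l))"
        using 1 n unfolding sum_split5[OF n5] tail
        by (simp add: S vi B2_adj_iff[OF n5])
      also have "\<dots> = (4*a^2*l + (n-5)*b^2*(l-c)) / (l * (l - c))"
        using lcne l0 by (simp add: field_simps power2_eq_square)
      also have "\<dots> = l" unfolding eq[symmetric] using lcne l0 by (simp add: field_simps power2_eq_square)
      finally show ?thesis using 1 vi[OF i] by simp
    next
      case 2
      have tail: "(\<Sum>j\<in>{5..<n}. ?S$$(i,j) * v$j) = 0"
        using 2 by (intro sum.neutral) (auto simp: S B2_adj_iff[OF n5])
      have "(\<Sum>j<n. ?S$$(i,j) * v$j) = a + c * (a/(l-c))"
        using 2 n unfolding sum_split5[OF n5] tail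
        by (cases "i = 1"; cases "i = 2"; cases "i = 3"; simp add: S vi B2_adj_iff[OF n5])
      also have "\<dots> = l * (a/(l-c))" using lcne by (simp add: field_simps)
      finally show ?thesis using 2 vi[OF i] by simp
    next
      case 3
      have tail: "(\<Sum>j\<in>{5..<n}. ?S$$(i,j) * v$j) = 0"
        using 3 i by (intro sum.neutral) (auto simp: S B2_adj_iff[OF n5])
      have "(\<Sum>j<n. ?S$$(i,j) * v$j) = b"
        using 3 i n unfolding sum_split5[OF n5] tail
        by (simp add: S vi B2_adj_iff[OF n5])
      also have "\<dots> = l * (b/l)" using l0 by simp
      finally show ?thesis using 3 vi[OF i] by simp
    qed
  qed
  show ?thesis
    by (rule eigenvalueI[OF sombor_carrier dv, of 0]) (use n vi[of 0] row in auto)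
qed


lemma Fp_nonneg: "Fp p x y \<ge> 0" unfolding Fp_def by simp

lemma Fp_pos: "x > 0 \<Longrightarrow> y \<ge> 0 \<Longrightarrow> Fp p x y > 0"
proof -
  assume "x > 0" "y \<ge> 0"
  hence "x powr p + y powr p > 0" by (intro add_pos_nonneg) auto
  thus ?thesis unfolding Fp_def by simp
qed

lemma B3_eig0:
  assumes n: "n \<ge> 6"
  shows "eigenvalue (sombor_mat p n (B3_adj n)) 0"
proof -
  let ?S = "sombor_mat p n (B3_adj n)"
  have n5: "n \<ge> 5" using n by simp
  define v where "v = vec n (\<lambda>i. if i=2 then 1 else if i=3 then -1 else (0::real))"
  have dv: "dim_vec v = n" unfolding v_def by simp
  have vi: "\<And>i. i < n \<Longrightarrow> v$i = (if i=2 then 1 else if i=3 then -1 else 0)"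
    unfolding v_def by simp
  have row: "(\<Sum>j<n. ?S$$(i,j) * v$j) = 0 * v$i" if i: "i < n" for i
  proof -
    have tail: "(\<Sum>j\<in>{5..<n}. ?S$$(i,j) * v$j) = 0"
      by (intro sum.neutral) (auto simp: vi)
    show ?thesis
      using i n unfolding sum_split5[OF n5] tail
      by (simp add: B3_S[OF n5] vi B3_adj_iff[OF n5])
  qed
  show ?thesis
    by (rule eigenvalueI[OF sombor_carrier dv, of 2]) (use n vi[of 2] row in auto)
qed

lemma B3_upper:
  fixes n :: nat and p E G H Q R U \<beta> k :: real
  assumes n: "n \<ge> 6"
    and bE: "Fp p (real (n-2)) 4 \<le> E" and bG: "Fp p (real (n-2)) 2 \<le> G"
    and bH: "Fp p (real (n-2)) 1 \<le> H" and bQ: "Fp p 4 2 \<le> Q" and bR: "Fp p 4 1 \<le> R"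
    and U0: "U > 0" and b0: "\<beta> > 0"
    and ru: "E*\<beta>*U + 2*G*(G + Q*\<beta>) + (n-5)*H^2 \<le> U^2"
    and rv: "E*U + 2*Q*(G + Q*\<beta>) + R^2*\<beta> \<le> U^2*\<beta>"
    and ev: "eigenvalue (sombor_mat p n (B3_adj n)) k"
  shows "k \<le> U"
proof -
  let ?S = "sombor_mat p n (B3_adj n)"
  have n5: "n \<ge> 5" using n by simp
  define e g h q r where "e = Fp p (real (n-2)) 4" and "g = Fp p (real (n-2)) 2"
    and "h = Fp p (real (n-2)) 1" and "q = Fp p 4 2" and "r = Fp p 4 1"
  have nn2: "real (n-2) > 0" using n by simp
  have pos: "e > 0" "g > 0" "h > 0" "q > 0" "r > 0"
    unfolding e_def g_def h_def q_def r_def using nn2 by (auto intro!: Fp_pos)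
  have S: "\<And>i j. i<n \<Longrightarrow> j<n \<Longrightarrow> ?S $$ (i,j) = (if B3_adj n i j then
     (if i = 0 \<or> j = 0 then (if i = 1 \<or> j = 1 then e else if i \<le> 3 \<and> j \<le> 3 then g else h)
      else (if i = 4 \<or> j = 4 then r else q)) else 0)"
    unfolding e_def g_def h_def q_def r_def by (rule B3_S[OF n5])
  define \<gamma> where "\<gamma> = (G + Q*\<beta>)/U"
  define \<delta> where "\<delta> = R*\<beta>/U"
  define \<zeta> where "\<zeta> = H/U"
  have Gp: "G > 0" "H > 0" "Q > 0" "R > 0" "E > 0" using pos bE bG bH bQ bR unfolding e_def g_def h_def q_def r_def by auto
  have gp: "\<gamma> > 0" "\<delta> > 0" "\<zeta> > 0" unfolding \<gamma>_def \<delta>_def \<zeta>_def using Gp U0 b0 by (auto intro!: divide_pos_pos add_pos_pos mult_pos_pos)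
  define w where "w = (\<lambda>i::nat. if i=0 then 1 else if i=1 then \<beta> else if i \<le> 3 then \<gamma> else if i = 4 then \<delta> else \<zeta>)"
  have wpos: "\<And>i. w i > 0" unfolding w_def using gp b0 by auto
  have rows: "(\<Sum>j<n. ?S$$(i,j) * w j) \<le> U * w i" if i: "i < n" for i
  proof -
    consider "i = 0" | "i = 1" | "i = 2 \<or> i = 3" | "i = 4" | "i \<ge> 5" by linarith
    then show ?thesis
    proof cases
      case 1
      have tail: "(\<Sum>j\<in>{5..<n}. ?S$$(i,j) * w j) = (\<Sum>j\<in>{5..<n}. h * \<zeta>)"
        using 1 by (intro sum.cong) (auto simp: S w_def B3_adj_iff[OF n5])
      have "(\<Sum>j<n. ?S$$(i,j) * w j) = e * \<beta> + 2 * (g * \<gamma>) + (n-5) * (h * \<zeta>)"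
        using 1 n unfolding sum_split5[OF n5] tail
        by (simp add: S w_def B3_adj_iff[OF n5])
      also have "\<dots> \<le> E * \<beta> + 2 * (G * \<gamma>) + (n-5) * (H * \<zeta>)"
        using bE bG bH gp b0 unfolding e_def g_def h_def
        by (intro add_mono mult_right_mono mult_left_mono) auto
      also have "\<dots> = (E*\<beta>*U + 2*G*(G + Q*\<beta>) + (n-5)*H^2) / U"
        unfolding \<gamma>_def \<zeta>_def using U0 by (simp add: field_simps power2_eq_square)
      also have "\<dots> \<le> U^2 / U" using ru U0 by (simp add: divide_right_mono)
      also have "\<dots> = U * w i" using 1 U0 by (simp add: w_def power2_eq_square)
      finally show ?thesis .
    next
      case 2
      have tail: "(\<Sum>j\<in>{5..<n}. ?S$$(i,j) * w j) = 0"
        using 2 by (intro sum.neutral) (auto simp: S B3_adj_iff[OF n5])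
      have "(\<Sum>j<n. ?S$$(i,j) * w j) = e + 2 * (q * \<gamma>) + r * \<delta>"
        using 2 n unfolding sum_split5[OF n5] tail
        by (simp add: S w_def B3_adj_iff[OF n5])
      also have "\<dots> \<le> E + 2 * (Q * \<gamma>) + R * \<delta>"
        using bE bQ bR gp b0 unfolding e_def q_def r_def
        by (intro add_mono mult_right_mono mult_left_mono) auto
      also have "\<dots> = (E*U + 2*Q*(G + Q*\<beta>) + R^2*\<beta>) / U"
        unfolding \<gamma>_def \<delta>_def using U0 by (simp add: field_simps power2_eq_square)
      also have "\<dots> \<le> (U^2*\<beta>) / U" using rv U0 by (simp add: divide_right_mono)
      also have "\<dots> = U * w i" using 2 U0 by (simp add: w_def power2_eq_square)
      finally show ?thesis .
    next
      case 3
      have tail: "(\<Sum>j\<in>{5..<n}. ?S$$(i,j) * w j) = 0"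
        using 3 by (intro sum.neutral) (auto simp: S B3_adj_iff[OF n5])
      have "(\<Sum>j<n. ?S$$(i,j) * w j) = g + q * \<beta>"
        using 3 n unfolding sum_split5[OF n5] tail
        by (auto simp: S w_def B3_adj_iff[OF n5])
      also have "\<dots> \<le> G + Q * \<beta>"
        using bG bQ b0 unfolding g_def q_def
        by (intro add_mono mult_right_mono) auto
      also have "\<dots> = U * w i" using 3 U0 by (auto simp: w_def \<gamma>_def)
      finally show ?thesis .
    next
      case 4
      have tail: "(\<Sum>j\<in>{5..<n}. ?S$$(i,j) * w j) = 0"
        using 4 by (intro sum.neutral) (auto simp: S B3_adj_iff[OF n5])
      have "(\<Sum>j<n. ?S$$(i,j) * w j) = r * \<beta>"
        using 4 n unfolding sum_split5[OF n5] tail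
        by (simp add: S w_def B3_adj_iff[OF n5])
      also have "\<dots> \<le> R * \<beta>"
        using bR b0 unfolding r_def by (intro mult_right_mono) auto
      also have "\<dots> = U * w i" using 4 U0 by (auto simp: w_def \<delta>_def)
      finally show ?thesis .
    next
      case 5
      have tail: "(\<Sum>j\<in>{5..<n}. ?S$$(i,j) * w j) = 0"
        using 5 i by (intro sum.neutral) (auto simp: S B3_adj_iff[OF n5])
      have "(\<Sum>j<n. ?S$$(i,j) * w j) = h"
        using 5 i n unfolding sum_split5[OF n5] tail
        by (simp add: S w_def B3_adj_iff[OF n5])
      also have "\<dots> \<le> H" using bH unfolding h_def .
      also have "\<dots> = U * w i" using 5 U0 by (auto simp: w_def \<zeta>_def)
      finally show ?thesis .
    qed
  qed
  have nn: "\<And>i j. i<n \<Longrightarrow> j<n \<Longrightarrow> ?S$$(i,j) \<ge> 0"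
    by (simp add: sombor_entry Fp_nonneg)
  show ?thesis by (rule collatz[OF sombor_carrier nn wpos rows ev])
qed


lemma B2_root:
  fixes n :: nat and p L a b c :: real
  defines "a \<equiv> Fp p (real (n-1)) 2" and "b \<equiv> Fp p (real (n-1)) 1" and "c \<equiv> Fp p 2 2"
  assumes n: "n \<ge> 6" and Lc: "L > c" and L0: "L > 0"
    and fL: "L^2 * (L - c) - 4*a^2*L - (n-5)*b^2*(L-c) < 0"
  shows "L < rho (sombor_mat p n (B2_adj n))"
proof -
  define f where "f = (\<lambda>x::real. x^2 * (x - c) - 4*a^2*x - (n-5)*b^2*(x-c))"
  define D where "D = 4*a^2 + (n-5)*b^2 + L + 1"
  define X where "X = c + D"
  have c0: "c \<ge> 0" unfolding c_def by (rule Fp_nonneg)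
  have nn: "4*a^2 + (n-5)*b^2 \<ge> 0" by (intro add_nonneg_nonneg mult_nonneg_nonneg) auto
  have D0: "D > 0" "D > 4*a^2 + (n-5)*b^2" unfolding D_def using L0 nn by linarith+
  have X1: "X \<ge> 1" "X \<ge> D" "X \<ge> L" unfolding X_def D_def using c0 nn L0 by linarith+
  have fX: "f X > 0"
  proof -
    have "X^2 * D \<ge> X * D" using X1 D0 by (simp add: power2_eq_square mult_right_mono)
    moreover have "X * D > X * (4*a^2 + (n-5)*b^2)" using X1 D0 by simp
    moreover have "(n-5)*b^2*X \<ge> (n-5)*b^2*D" using X1 by (simp add: mult_left_mono)
    ultimately have "X^2 * D - 4*a^2*X - (n-5)*b^2*D > 0" by (simp add: algebra_simps)
    moreover have "X - c = D" unfolding X_def by simp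
    ultimately show ?thesis unfolding f_def by simp
  qed
  have "\<exists>x. L \<le> x \<and> x \<le> X \<and> f x = 0"
    by (rule IVT') (use fL fX X1 in \<open>auto simp: f_def intro!: continuous_intros\<close>)
  then obtain x where x: "L \<le> x" "f x = 0" by auto
  have xL: "x \<noteq> L" using x fL unfolding f_def by auto
  hence xL': "x > L" using x by simp
  have "eigenvalue (sombor_mat p n (B2_adj n)) x"
    unfolding a_def b_def c_def
    by (rule B2_eig[OF n]) (use xL' Lc L0 x(2) in \<open>auto simp: f_def a_def b_def c_def\<close>)
  hence "x \<le> rho (sombor_mat p n (B2_adj n))" by (rule rho_ge[OF sombor_carrier])
  thus ?thesis using xL' by simp
qed

lemma B2_bound:
  fixes n :: nat and p L A B C Bu Cu :: real
  assumes n: "n \<ge> 6"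
    and bA: "A \<le> Fp p (real (n-1)) 2" and bB: "B \<le> Fp p (real (n-1)) 1" and bC: "C \<le> Fp p 2 2"
    and A0: "A \<ge> 0" and B0: "B \<ge> 0"
    and bBu: "Fp p (real (n-1)) 1 \<le> Bu" and bCu: "Fp p 2 2 \<le> Cu"
    and LCu: "L > Cu" and L0: "L > 0" and LB: "L^2 \<ge> (n-5)*Bu^2"
    and fL: "L^2 * (L - C) - 4*A^2*L - (n-5)*B^2*(L-C) < 0"
  shows "L < rho (sombor_mat p n (B2_adj n))"
proof -
  define a b c where "a = Fp p (real (n-1)) 2" and "b = Fp p (real (n-1)) 1" and "c = Fp p 2 2"
  have b0: "b \<ge> 0" unfolding b_def by (rule Fp_nonneg)
  have Lc: "L > c" using LCu bCu unfolding c_def by simp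
  have LC: "L - C > 0" using Lc bC unfolding c_def by simp
  have bb: "b^2 \<le> Bu^2" using b0 bBu unfolding b_def by (intro power_mono) auto
  have K: "L^2 - (n-5)*b^2 \<ge> 0"
  proof -
    have "(n-5)*b^2 \<le> (n-5)*Bu^2" using bb by (intro mult_left_mono) auto
    thus ?thesis using LB by simp
  qed
  have e1: "c * (L^2 - (n-5)*b^2) \<ge> C * (L^2 - (n-5)*b^2)"
    using K bC unfolding c_def by (intro mult_right_mono) auto
  have e2: "4*a^2*L \<ge> 4*A^2*L" using bA A0 L0 unfolding a_def
    by (intro mult_right_mono mult_left_mono power_mono) auto
  have e3: "(n-5)*b^2*(L-C) \<ge> (n-5)*B^2*(L-C)" using bB B0 LC unfolding b_def
    by (intro mult_right_mono mult_left_mono power_mono) auto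
  have "L^2 * (L - c) - 4*a^2*L - (n-5)*b^2*(L-c)
      = L^3 - 4*a^2*L - (n-5)*b^2*L - c * (L^2 - (n-5)*b^2)"
    by (simp add: algebra_simps power2_eq_square power3_eq_cube)
  also have "\<dots> \<le> L^3 - 4*a^2*L - (n-5)*b^2*L - C * (L^2 - (n-5)*b^2)" using e1 by simp
  also have "\<dots> = L^2 * (L - C) - 4*a^2*L - (n-5)*b^2*(L-C)"
    by (simp add: algebra_simps power2_eq_square power3_eq_cube)
  also have "\<dots> \<le> L^2 * (L - C) - 4*A^2*L - (n-5)*B^2*(L-C)" using e2 e3 by simp
  also have "\<dots> < 0" by (rule fL)
  finally have fLc: "L^2 * (L - c) - 4*a^2*L - (n-5)*b^2*(L-c) < 0" .
  show ?thesis by (rule B2_root[OF n]) (use Lc L0 fLc in \<open>auto simp: a_def b_def c_def\<close>)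
qed

lemma main_crit:
  fixes n :: nat and p E G H Q R U \<beta> A B C Bu Cu :: real
  assumes n: "n \<ge> 6"
    and bE: "Fp p (real (n-2)) 4 \<le> E" and bG: "Fp p (real (n-2)) 2 \<le> G"
    and bH: "Fp p (real (n-2)) 1 \<le> H" and bQ: "Fp p 4 2 \<le> Q" and bR: "Fp p 4 1 \<le> R"
    and U0: "U > 0" and b0: "\<beta> > 0"
    and ru: "E*\<beta>*U + 2*G*(G + Q*\<beta>) + (n-5)*H^2 \<le> U^2"
    and rv: "E*U + 2*Q*(G + Q*\<beta>) + R^2*\<beta> \<le> U^2*\<beta>"
    and bA: "A \<le> Fp p (real (n-1)) 2" and bB: "B \<le> Fp p (real (n-1)) 1" and bC: "C \<le> Fp p 2 2"
    and A0: "A \<ge> 0" and B0: "B \<ge> 0"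
    and bBu: "Fp p (real (n-1)) 1 \<le> Bu" and bCu: "Fp p 2 2 \<le> Cu"
    and UCu: "U > Cu" and UB: "U^2 \<ge> (n-5)*Bu^2"
    and fU: "U^2 * (U - C) - 4*A^2*U - (n-5)*B^2*(U-C) < 0"
  shows "rho (sombor_mat p n (B3_adj n)) < rho (sombor_mat p n (B2_adj n))"
proof -
  have "rho (sombor_mat p n (B3_adj n)) \<le> U"
    by (rule rho_le[OF sombor_carrier B3_eig0[OF n]])
       (rule B3_upper[OF n bE bG bH bQ bR U0 b0 ru rv])
  also have "U < rho (sombor_mat p n (B2_adj n))"
    by (rule B2_bound[OF n bA bB bC A0 B0 bBu bCu UCu U0 UB fU])
  finally show ?thesis .
qed

lemma powr_inv_pos: fixes P V :: real assumes "P > 0" "V > 0" shows "(V powr P) powr (1/P) = V"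
proof -
  have "(V powr P) powr (1/P) = V powr (P * (1/P))" by (rule powr_powr)
  also have "P * (1/P) = 1" using assms by simp
  finally show ?thesis using assms by simp
qed

lemma Fp_ge: assumes "p > 0" "x > 0" "y \<ge> 0" shows "x \<le> Fp p x y"
proof -
  have "x = (x powr p) powr (1/p)" using powr_inv_pos[OF assms(1,2)] by simp
  also have "\<dots> \<le> (x powr p + y powr p) powr (1/p)"
    using assms by (intro powr_mono2) auto
  finally show ?thesis unfolding Fp_def .
qed

lemma Fp_mono_p:
  assumes P: "0 < P" "P \<le> p" and x: "x > 0" and y: "y > 0"
  shows "Fp p x y \<le> Fp P x y"
proof -
  define S where "S = x powr P + y powr P"
  define r where "r = p / P"
  have S0: "S > 0" unfolding S_def using x y by (simp add: add_pos_pos)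
  have r1: "r \<ge> 1" unfolding r_def using P by simp
  define \<alpha> where "\<alpha> = x powr P / S"
  define \<beta> where "\<beta> = y powr P / S"
  have ab: "\<alpha> \<ge> 0" "\<beta> \<ge> 0" "\<alpha> + \<beta> = 1" unfolding \<alpha>_def \<beta>_def S_def using S0 S_def
    by (auto simp: add_divide_distrib[symmetric])
  have a1: "\<alpha> \<le> 1" "\<beta> \<le> 1" using ab by auto
  have xp: "x powr p = \<alpha> powr r * S powr r"
  proof -
    have "x powr p = (x powr P) powr r" unfolding r_def using P by (simp add: powr_powr)
    also have "x powr P = \<alpha> * S" unfolding \<alpha>_def using S0 by simp
    finally show ?thesis using ab S0 by (simp add: powr_mult)
  qed
  have yp: "y powr p = \<beta> powr r * S powr r"
  proof -
    have "y powr p = (y powr P) powr r" unfolding r_def using P by (simp add: powr_powr)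
    also have "y powr P = \<beta> * S" unfolding \<beta>_def using S0 by simp
    finally show ?thesis using ab S0 by (simp add: powr_mult)
  qed
  have "\<alpha> powr r \<le> \<alpha> powr 1" by (rule powr_mono') (use r1 ab a1 in auto)
  hence ar: "\<alpha> powr r \<le> \<alpha>" using ab by simp
  have "\<beta> powr r \<le> \<beta> powr 1" by (rule powr_mono') (use r1 ab a1 in auto)
  hence br: "\<beta> powr r \<le> \<beta>" using ab by simp
  have "x powr p + y powr p \<le> (\<alpha> + \<beta>) * S powr r"
    unfolding xp yp distrib_right using ar br S0 by (intro add_mono mult_right_mono) auto
  also have "\<dots> = S powr r" using ab by simp
  finally have le: "x powr p + y powr p \<le> S powr r" .
  have "Fp p x y \<le> (S powr r) powr (1/p)"
    unfolding Fp_def using le P x y by (intro powr_mono2) auto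
  also have "\<dots> = S powr (1/P)" unfolding r_def using P by (simp add: powr_powr)
  finally show ?thesis unfolding Fp_def S_def .
qed

lemma Fp_le_2:
  assumes p: "p \<ge> 2" and x: "x > 0" and y: "y > 0" and V: "V \<ge> 0" "x^2 + y^2 \<le> V^2"
  shows "Fp p x y \<le> V"
proof -
  have "Fp p x y \<le> Fp 2 x y" by (rule Fp_mono_p) (use p x y in auto)
  also have "Fp 2 x y = sqrt (x^2 + y^2)" unfolding Fp_def using x y
    by (simp add: powr_half_sqrt add_nonneg_nonneg)
  also have "\<dots> \<le> V" using V by (simp add: real_sqrt_le_iff power2_eq_square real_le_lsqrt)
  finally show ?thesis .
qed

lemma powr_rat_pow: assumes "z > 0" "d > 0" shows "(z powr (real m / real d)) ^ d = z ^ m"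
proof -
  have "(z powr (real m / real d)) ^ d = z powr (real d * (real m / real d))"
    using assms by (simp add: powr_power)
  also have "\<dots> = z powr (real m)" using assms by simp
  also have "\<dots> = z ^ m" using assms by (simp add: powr_realpow)
  finally show ?thesis .
qed

lemma powr_rat_le:
  assumes "z > 0" "d > 0" "T \<ge> 0" "z ^ m \<le> T ^ d"
  shows "z powr (real m / real d) \<le> T"
proof -
  have "(z powr (real m / real d)) ^ d \<le> T ^ d" using powr_rat_pow[OF assms(1,2)] assms(4) by simp
  thus ?thesis using assms power_mono_iff[of "z powr (real m / real d)" T d] by simp
qed

lemma powr_rat_ge:
  assumes "z > 0" "d > 0" "T \<ge> 0" "T ^ d \<le> z ^ m"
  shows "T \<le> z powr (real m / real d)"
proof -
  have "T ^ d \<le> (z powr (real m / real d)) ^ d" using powr_rat_pow[OF assms(1,2)] assms(4) by simp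
  thus ?thesis using assms power_mono_iff[of T "z powr (real m / real d)" d] by simp
qed

lemma Fp_rat_upper:
  assumes x: "x > 0" and y: "y > 0" and d: "d > 0" and m: "m > 0" and T: "T \<ge> 0" and V: "V > 0"
    and h1: "(y/x)^m \<le> T^d" and h2: "(1+T)^d \<le> (V/x)^m"
  shows "Fp (real m / real d) x y \<le> V"
proof -
  let ?P = "real m / real d"
  have P0: "?P > 0" using d m by simp
  have z: "(y/x) powr ?P \<le> T" by (rule powr_rat_le) (use x y d T h1 in auto)
  have w: "1 + T \<le> (V/x) powr ?P" by (rule powr_rat_ge) (use x V d T h2 in auto)
  have "y powr ?P = x powr ?P * (y/x) powr ?P" using x y by (simp add: powr_divide)
  hence "x powr ?P + y powr ?P = x powr ?P * (1 + (y/x) powr ?P)" by (simp add: algebra_simps)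
  also have "\<dots> \<le> x powr ?P * (V/x) powr ?P"
    using z w x by (intro mult_left_mono) auto
  also have "\<dots> = V powr ?P" using x V by (simp add: powr_divide)
  finally have le: "x powr ?P + y powr ?P \<le> V powr ?P" .
  have "Fp ?P x y \<le> (V powr ?P) powr (1/?P)"
    unfolding Fp_def using le P0 by (intro powr_mono2) auto
  also have "\<dots> = V" using powr_inv_pos[OF P0 V] .
  finally show ?thesis .
qed

lemma Fp_rat_lower:
  assumes x: "x > 0" and y: "y > 0" and d: "d > 0" and m: "m > 0" and T: "T \<ge> 0" and V: "V > 0"
    and h1: "T^d \<le> (y/x)^m" and h2: "(V/x)^m \<le> (1+T)^d"
  shows "V \<le> Fp (real m / real d) x y"
proof -
  let ?P = "real m / real d"
  have P0: "?P > 0" using d m by simp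
  have z: "T \<le> (y/x) powr ?P" by (rule powr_rat_ge) (use x y d T h1 in auto)
  have w: "(V/x) powr ?P \<le> 1 + T" by (rule powr_rat_le) (use x V d T h2 in auto)
  have "V powr ?P = x powr ?P * (V/x) powr ?P" using x V by (simp add: powr_divide)
  also have "\<dots> \<le> x powr ?P * (1 + (y/x) powr ?P)"
    using z w x by (intro mult_left_mono) auto
  also have "\<dots> = x powr ?P + y powr ?P" using x y by (simp add: powr_divide algebra_simps)
  finally have le: "V powr ?P \<le> x powr ?P + y powr ?P" .
  have "V = (V powr ?P) powr (1/?P)" using powr_inv_pos[OF P0 V] by simp
  also have "\<dots> \<le> Fp ?P x y"
    unfolding Fp_def using le P0 V by (intro powr_mono2) auto
  finally show ?thesis .
qed

lemma Fp_upper_at: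
  assumes P: "real m / real d \<le> p" and x: "x > 0" and y: "y > 0" and d: "d > 0" and m: "m > 0"
    and T: "T \<ge> 0" and V: "V > 0" and h1: "(y/x)^m \<le> T^d" and h2: "(1+T)^d \<le> (V/x)^m"
  shows "Fp p x y \<le> V"
proof -
  have "Fp p x y \<le> Fp (real m / real d) x y" by (rule Fp_mono_p) (use P x y d m in auto)
  also have "\<dots> \<le> V" by (rule Fp_rat_upper[OF x y d m T V h1 h2])
  finally show ?thesis .
qed

lemma Fp_lower_at:
  assumes P: "p \<le> real m / real d" and p0: "p > 0" and x: "x > 0" and y: "y > 0" and d: "d > 0" and m: "m > 0"
    and T: "T \<ge> 0" and V: "V > 0" and h1: "T^d \<le> (y/x)^m" and h2: "(V/x)^m \<le> (1+T)^d"
  shows "V \<le> Fp p x y"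
proof -
  have "V \<le> Fp (real m / real d) x y" by (rule Fp_rat_lower[OF x y d m T V h1 h2])
  also have "\<dots> \<le> Fp p x y" by (rule Fp_mono_p) (use P p0 x y in auto)
  finally show ?thesis .
qed

lemma big_case:
  fixes n :: nat and p :: real
  assumes n: "n \<ge> 13" and p2: "p \<ge> 2"
  shows "rho (sombor_mat p n (B3_adj n)) < rho (sombor_mat p n (B2_adj n))"
proof -
  define K where "K = real n - 2"
  have K11: "K \<ge> 11" unfolding K_def using n by simp
  have rn2: "real (n-2) = K" unfolding K_def using n by simp
  have rn1: "real (n-1) = K+1" unfolding K_def using n by simp
  have rn5: "real (n-5) = K-3" unfolding K_def using n by simp
  have p0: "p > 0" using p2 by simp
  define s where "s = sqrt (K+2)"
  have s3: "s \<ge> 3" unfolding s_def using K11 by (simp add: real_le_rsqrt)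
  have ss: "s^2 = K+2" unfolding s_def using K11 by simp
  have sle: "s \<le> (K+11)/6"
  proof -
    have h7: "0 \<le> (K-7)*(K-7)/36" by simp
    have "((K+11)/6)^2 - (K+2) = (K-7)*(K-7)/36" by (simp add: power2_eq_square field_simps)
    hence "(K+2) \<le> ((K+11)/6)^2" using h7 by linarith
    hence "sqrt (K+2) \<le> sqrt (((K+11)/6)^2)" by (rule real_sqrt_le_mono)
    thus ?thesis unfolding s_def using K11 by simp
  qed
  define U where "U = K * s"
  define \<beta> where "\<beta> = (3/2) * s / K"
  have U2: "U^2 = K^2 * (K+2)" unfolding U_def using ss by (simp add: power_mult_distrib)
  have U3K: "U \<ge> 3*K" unfolding U_def using s3 K11 by simp
  have U0: "U > 0" using U3K K11 by simp
  have bU: "\<beta> * U = (3/2)*(K+2)" unfolding \<beta>_def U_def using K11 ss by (simp add: power2_eq_square)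
  have b0: "\<beta> > 0" unfolding \<beta>_def using s3 K11 by simp
  have bhalf: "\<beta> \<le> 1/2"
  proof -
    have "\<beta> \<le> (3/2) * ((K+11)/6) / K" unfolding \<beta>_def using sle K11 by (intro divide_right_mono mult_left_mono) auto
    also have "\<dots> \<le> 1/2" using K11 by (simp add: field_simps)
    finally show ?thesis .
  qed
  have K2: "K*K \<ge> 11*K" using K11 by (intro mult_right_mono) auto
  have bE: "Fp p (real (n-2)) 4 \<le> K+2" unfolding rn2
    by (rule Fp_le_2) (use p2 K11 in \<open>auto simp: power2_eq_square algebra_simps\<close>)
  have bG: "Fp p (real (n-2)) 2 \<le> K+1/2" unfolding rn2
    by (rule Fp_le_2) (use p2 K11 in \<open>auto simp: power2_eq_square algebra_simps\<close>)
  have bH: "Fp p (real (n-2)) 1 \<le> K+1/8" unfolding rn2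
    by (rule Fp_le_2) (use p2 K11 in \<open>auto simp: power2_eq_square algebra_simps\<close>)
  have bQ: "Fp p 4 2 \<le> 9/2" by (rule Fp_le_2) (use p2 in \<open>auto simp: power2_eq_square\<close>)
  have bR: "Fp p 4 1 \<le> 9/2" by (rule Fp_le_2) (use p2 in \<open>auto simp: power2_eq_square\<close>)
  have bBu: "Fp p (real (n-1)) 1 \<le> K+2" unfolding rn1
    by (rule Fp_le_2) (use p2 K11 in \<open>auto simp: power2_eq_square algebra_simps\<close>)
  have bCu: "Fp p 2 2 \<le> 3" by (rule Fp_le_2) (use p2 in \<open>auto simp: power2_eq_square\<close>)
  have bA: "K+1 \<le> Fp p (real (n-1)) 2" unfolding rn1 by (rule Fp_ge) (use p0 K11 in auto)
  have bB: "K+1 \<le> Fp p (real (n-1)) 1" unfolding rn1 by (rule Fp_ge) (use p0 K11 in auto)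
  have bC: "2 \<le> Fp p 2 2" by (rule Fp_ge) (use p0 in auto)
  have ru: "(K+2)*\<beta>*U + 2*(K+1/2)*((K+1/2) + 9/2*\<beta>) + real (n-5)*(K+1/8)^2 \<le> U^2"
  proof -
    have t1: "(K+2)*\<beta>*U = (K+2)*((3/2)*(K+2))" using bU by (metis mult.assoc)
    have "(K+2)*\<beta>*U + 2*(K+1/2)*((K+1/2) + 9/2*\<beta>) + real (n-5)*(K+1/8)^2
        = (K+2)*((3/2)*(K+2)) + 2*(K+1/2)^2 + 9*(K+1/2)*\<beta> + (K-3)*(K+1/8)^2"
      unfolding rn5 t1 by (simp add: algebra_simps power2_eq_square)
    also have "\<dots> \<le> (K+2)*((3/2)*(K+2)) + 2*(K+1/2)^2 + 9*(K+1/2)*(1/2) + (K-3)*(K+1/8)^2"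
      using bhalf K11 by simp
    also have "\<dots> = K^3 + 3/4*K^2 + 753/64*K + 557/64"
      by (simp add: field_simps power2_eq_square power3_eq_cube)
    also have "\<dots> \<le> K^2*(K+2)"
    proof -
      have "K^2*(K+2) - (K^3 + 3/4*K^2 + 753/64*K + 557/64) = 5/4*(K*K) - 753/64*K - 557/64"
        by (simp add: field_simps power2_eq_square power3_eq_cube)
      also have "\<dots> \<ge> 0" using K2 K11 by linarith
      finally show ?thesis by simp
    qed
    finally show ?thesis using U2 by simp
  qed
  have rv: "(K+2)*U + 2*(9/2)*((K+1/2) + 9/2*\<beta>) + (9/2)^2*\<beta> \<le> U^2*\<beta>"
  proof -
    have e1: "U^2*\<beta> = (3/2)*(K+2)*U" using bU by (simp add: power2_eq_square algebra_simps)
    have "(K+2)*U + 2*(9/2)*((K+1/2) + 9/2*\<beta>) + (9/2)^2*\<beta> = (K+2)*U + 9*K + 9/2 + 243/4*\<beta>"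
      by (simp add: algebra_simps power2_eq_square)
    also have "\<dots> \<le> (K+2)*U + 9*K + 9/2 + 243/8" using bhalf by simp
    also have "\<dots> \<le> (3/2)*(K+2)*U"
    proof -
      have "(K+2)*U \<ge> (K+2)*(3*K)" using U3K K11 by (intro mult_left_mono) auto
      hence "(K+2)*U \<ge> 3*(K*K) + 6*K" by (simp add: algebra_simps)
      thus ?thesis using K2 K11 by linarith
    qed
    finally show ?thesis using e1 by simp
  qed
  have UB: "U^2 \<ge> real (n-5)*(K+2)^2"
  proof -
    have "U^2 - real (n-5)*(K+2)^2 = K^2*(K+2) - (K-3)*(K+2)^2" by (simp only: U2 rn5)
    also have "\<dots> = (K+2)*(K+6)"
      by (simp add: algebra_simps power2_eq_square power3_eq_cube)
    also have "\<dots> \<ge> 0" using K11 by simp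
    finally show ?thesis by simp
  qed
  have fU: "U^2 * (U - 2) - 4*(K+1)^2*U - real (n-5)*(K+1)^2*(U-2) < 0"
  proof -
    have "U^2 * (U - 2) - 4*(K+1)^2*U - real (n-5)*(K+1)^2*(U-2)
        = K^2*(K+2) * (U - 2) - 4*(K+1)^2*U - (K-3)*(K+1)^2*(U-2)" by (simp only: U2 rn5)
    also have "\<dots> = - ((K^2+3*K+1)*U + 2*(3*K^2+5*K+3))"
      by (simp add: algebra_simps power2_eq_square power3_eq_cube)
    also have "\<dots> < 0"
    proof -
      have "K^2+3*K+1 > 0" using K11 by (simp add: add_pos_pos)
      hence "(K^2+3*K+1)*U > 0" using U0 by simp
      moreover have "2*(3*K^2+5*K+3) > 0" using K11 by (simp add: add_pos_pos)
      ultimately show ?thesis by linarith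
    qed
    finally show ?thesis .
  qed
  show ?thesis
    by (rule main_crit[OF _ bE bG bH bQ bR U0 b0 ru rv bA bB bC _ _ bBu bCu _ UB fU])
       (use n K11 U3K in auto)
qed

lemma n6_case0:
  assumes p1: "2 \<le> p" and p2: "p \<le> (41/20)"
  shows "rho (sombor_mat p 6 (B3_adj 6)) < rho (sombor_mat p 6 (B2_adj 6))"
proof -
  have p0: "p > 0" using p1 by simp
  have bE: "Fp p 4 4 \<le> (282843/50000)"
    by (rule Fp_upper_at[where m=2 and d=1 and T="1"]) (use p1 in \<open>simp_all add: power_divide\<close>)
  have bG: "Fp p 4 2 \<le> (223607/50000)"
    by (rule Fp_upper_at[where m=2 and d=1 and T="(1/4)"]) (use p1 in \<open>simp_all add: power_divide\<close>)
  have bH: "Fp p 4 1 \<le> (412311/100000)"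
    by (rule Fp_upper_at[where m=2 and d=1 and T="(1/16)"]) (use p1 in \<open>simp_all add: power_divide\<close>)
  have bA: "(535919/100000) \<le> Fp p 5 2"
    by (rule Fp_lower_at[where m=41 and d=20 and T="(15283/100000)"]) (use p0 p2 in \<open>simp_all add: power_divide\<close>)
  have bB: "(127229/25000) \<le> Fp p 5 1"
    by (rule Fp_lower_at[where m=41 and d=20 and T="(369/10000)"]) (use p0 p2 in \<open>simp_all add: power_divide\<close>)
  have bC: "(280461/100000) \<le> Fp p 2 2"
    by (rule Fp_lower_at[where m=41 and d=20 and T="1"]) (use p0 p2 in \<open>simp_all add: power_divide\<close>)
  have p2': "p \<ge> 2" using p1 by simp
  have bBu: "Fp p 5 1 \<le> 6" by (rule Fp_le_2) (use p2' in auto)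
  have bCu: "Fp p 2 2 \<le> 3" by (rule Fp_le_2) (use p2' in auto)
  show ?thesis
    by (rule main_crit[where E="(282843/50000)" and G="(223607/50000)" and H="(412311/100000)" and Q="(223607/50000)" and R="(412311/100000)" and U="(3269/250)" and \<beta>=1 and A="(535919/100000)" and B="(127229/25000)" and C="(280461/100000)" and Bu=6 and Cu=3])
       (use bE bG bH bA bB bC bBu bCu in \<open>simp_all add: power2_eq_square\<close>)
qed

lemma n6_case1:
  assumes p1: "(41/20) \<le> p" and p2: "p \<le> (43/20)"
  shows "rho (sombor_mat p 6 (B3_adj 6)) < rho (sombor_mat p 6 (B2_adj 6))"
proof -
  have p0: "p > 0" using p1 by simp
  have bE: "Fp p 4 4 \<le> (140231/25000)"
    by (rule Fp_upper_at[where m=41 and d=20 and T="1"]) (use p1 in \<open>simp_all add: power_divide\<close>)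
  have bG: "Fp p 4 2 \<le> (88903/20000)"
    by (rule Fp_upper_at[where m=41 and d=20 and T="(24149/100000)"]) (use p1 in \<open>simp_all add: power_divide\<close>)
  have bH: "Fp p 4 1 \<le> (82243/20000)"
    by (rule Fp_upper_at[where m=41 and d=20 and T="(729/12500)"]) (use p1 in \<open>simp_all add: power_divide\<close>)
  have bA: "(5313/1000) \<le> Fp p 5 2"
    by (rule Fp_lower_at[where m=43 and d=20 and T="(2789/20000)"]) (use p0 p2 in \<open>simp_all add: power_divide\<close>)
  have bB: "(253623/50000) \<le> Fp p 5 1"
    by (rule Fp_lower_at[where m=43 and d=20 and T="(1571/50000)"]) (use p0 p2 in \<open>simp_all add: power_divide\<close>)
  have bC: "(55217/20000) \<le> Fp p 2 2"
    by (rule Fp_lower_at[where m=43 and d=20 and T="1"]) (use p0 p2 in \<open>simp_all add: power_divide\<close>)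
  have p2': "p \<ge> 2" using p1 by simp
  have bBu: "Fp p 5 1 \<le> 6" by (rule Fp_le_2) (use p2' in auto)
  have bCu: "Fp p 2 2 \<le> 3" by (rule Fp_le_2) (use p2' in auto)
  show ?thesis
    by (rule main_crit[where E="(140231/25000)" and G="(88903/20000)" and H="(82243/20000)" and Q="(88903/20000)" and R="(82243/20000)" and U="(6497/500)" and \<beta>=1 and A="(5313/1000)" and B="(253623/50000)" and C="(55217/20000)" and Bu=6 and Cu=3])
       (use bE bG bH bA bB bC bBu bCu in \<open>simp_all add: power2_eq_square\<close>)
qed

lemma n6_case2:
  assumes p1: "(43/20) \<le> p" and p2: "p \<le> (23/10)"
  shows "rho (sombor_mat p 6 (B3_adj 6)) < rho (sombor_mat p 6 (B2_adj 6))"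
proof -
  have p0: "p > 0" using p1 by simp
  have bE: "Fp p 4 4 \<le> (138043/25000)"
    by (rule Fp_upper_at[where m=43 and d=20 and T="1"]) (use p1 in \<open>simp_all add: power_divide\<close>)
  have bG: "Fp p 4 2 \<le> (8793/2000)"
    by (rule Fp_upper_at[where m=43 and d=20 and T="(5633/25000)"]) (use p1 in \<open>simp_all add: power_divide\<close>)
  have bH: "Fp p 4 1 \<le> (409321/100000)"
    by (rule Fp_upper_at[where m=43 and d=20 and T="(5077/100000)"]) (use p1 in \<open>simp_all add: power_divide\<close>)
  have bA: "(525567/100000) \<le> Fp p 5 2"
    by (rule Fp_lower_at[where m=23 and d=10 and T="(6077/50000)"]) (use p0 p2 in \<open>simp_all add: power_divide\<close>)
  have bB: "(31583/6250) \<le> Fp p 5 1"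
    by (rule Fp_lower_at[where m=23 and d=10 and T="(617/25000)"]) (use p0 p2 in \<open>simp_all add: power_divide\<close>)
  have bC: "(270341/100000) \<le> Fp p 2 2"
    by (rule Fp_lower_at[where m=23 and d=10 and T="1"]) (use p0 p2 in \<open>simp_all add: power_divide\<close>)
  have p2': "p \<ge> 2" using p1 by simp
  have bBu: "Fp p 5 1 \<le> 6" by (rule Fp_le_2) (use p2' in auto)
  have bCu: "Fp p 2 2 \<le> 3" by (rule Fp_le_2) (use p2' in auto)
  show ?thesis
    by (rule main_crit[where E="(138043/25000)" and G="(8793/2000)" and H="(409321/100000)" and Q="(8793/2000)" and R="(409321/100000)" and U="(6423/500)" and \<beta>=1 and A="(525567/100000)" and B="(31583/6250)" and C="(270341/100000)" and Bu=6 and Cu=3])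
       (use bE bG bH bA bB bC bBu bCu in \<open>simp_all add: power2_eq_square\<close>)
qed

lemma n6_case3:
  assumes p1: "(23/10) \<le> p" and p2: "p \<le> (51/20)"
  shows "rho (sombor_mat p 6 (B3_adj 6)) < rho (sombor_mat p 6 (B2_adj 6))"
proof -
  have p0: "p > 0" using p1 by simp
  have bE: "Fp p 4 4 \<le> (540683/100000)"
    by (rule Fp_upper_at[where m=23 and d=10 and T="1"]) (use p1 in \<open>simp_all add: power_divide\<close>)
  have bG: "Fp p 4 2 \<le> (433481/100000)"
    by (rule Fp_upper_at[where m=23 and d=10 and T="(20307/100000)"]) (use p1 in \<open>simp_all add: power_divide\<close>)
  have bH: "Fp p 4 1 \<le> (407091/100000)"
    by (rule Fp_upper_at[where m=23 and d=10 and T="(1031/25000)"]) (use p1 in \<open>simp_all add: power_divide\<close>)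
  have bA: "(518423/100000) \<le> Fp p 5 2"
    by (rule Fp_lower_at[where m=51 and d=20 and T="(4833/50000)"]) (use p0 p2 in \<open>simp_all add: power_divide\<close>)
  have bB: "(503219/100000) \<le> Fp p 5 1"
    by (rule Fp_lower_at[where m=51 and d=20 and T="(33/2000)"]) (use p0 p2 in \<open>simp_all add: power_divide\<close>)
  have bC: "(26247/10000) \<le> Fp p 2 2"
    by (rule Fp_lower_at[where m=51 and d=20 and T="1"]) (use p0 p2 in \<open>simp_all add: power_divide\<close>)
  have p2': "p \<ge> 2" using p1 by simp
  have bBu: "Fp p 5 1 \<le> 6" by (rule Fp_le_2) (use p2' in auto)
  have bCu: "Fp p 2 2 \<le> 3" by (rule Fp_le_2) (use p2' in auto)
  show ?thesis
    by (rule main_crit[where E="(540683/100000)" and G="(433481/100000)" and H="(407091/100000)" and Q="(433481/100000)" and R="(407091/100000)" and U="(1582/125)" and \<beta>=1 and A="(518423/100000)" and B="(503219/100000)" and C="(26247/10000)" and Bu=6 and Cu=3])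
       (use bE bG bH bA bB bC bBu bCu in \<open>simp_all add: power2_eq_square\<close>)
qed

lemma n6_case4:
  assumes p1: "(51/20) \<le> p" and p2: "p \<le> (16/5)"
  shows "rho (sombor_mat p 6 (B3_adj 6)) < rho (sombor_mat p 6 (B2_adj 6))"
proof -
  have p0: "p > 0" using p1 by simp
  have bE: "Fp p 4 4 \<le> (262471/50000)"
    by (rule Fp_upper_at[where m=51 and d=20 and T="1"]) (use p1 in \<open>simp_all add: power_divide\<close>)
  have bG: "Fp p 4 2 \<le> (425511/100000)"
    by (rule Fp_upper_at[where m=51 and d=20 and T="(4269/25000)"]) (use p1 in \<open>simp_all add: power_divide\<close>)
  have bH: "Fp p 4 1 \<le> (80907/20000)"
    by (rule Fp_upper_at[where m=51 and d=20 and T="(729/25000)"]) (use p1 in \<open>simp_all add: power_divide\<close>)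
  have bA: "(31761/6250) \<le> Fp p 5 2"
    by (rule Fp_lower_at[where m=16 and d=5 and T="(333/6250)"]) (use p0 p2 in \<open>simp_all add: power_divide\<close>)
  have bB: "(250451/50000) \<le> Fp p 5 1"
    by (rule Fp_lower_at[where m=16 and d=5 and T="(579/100000)"]) (use p0 p2 in \<open>simp_all add: power_divide\<close>)
  have bC: "(248371/100000) \<le> Fp p 2 2"
    by (rule Fp_lower_at[where m=16 and d=5 and T="1"]) (use p0 p2 in \<open>simp_all add: power_divide\<close>)
  have p2': "p \<ge> 2" using p1 by simp
  have bBu: "Fp p 5 1 \<le> 6" by (rule Fp_le_2) (use p2' in auto)
  have bCu: "Fp p 2 2 \<le> 3" by (rule Fp_le_2) (use p2' in auto)
  show ?thesis
    by (rule main_crit[where E="(262471/50000)" and G="(425511/100000)" and H="(80907/20000)" and Q="(425511/100000)" and R="(80907/20000)" and U="(12407/1000)" and \<beta>=1 and A="(31761/6250)" and B="(250451/50000)" and C="(248371/100000)" and Bu=6 and Cu=3])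
       (use bE bG bH bA bB bC bBu bCu in \<open>simp_all add: power2_eq_square\<close>)
qed

lemma n6_case5:
  assumes p1: "(16/5) \<le> p"
  shows "rho (sombor_mat p 6 (B3_adj 6)) < rho (sombor_mat p 6 (B2_adj 6))"
proof -
  have p0: "p > 0" using p1 by simp
  have bE: "Fp p 4 4 \<le> (62093/12500)"
    by (rule Fp_upper_at[where m=16 and d=5 and T="1"]) (use p1 in \<open>simp_all add: power_divide\<close>)
  have bG: "Fp p 4 2 \<le> (413123/100000)"
    by (rule Fp_upper_at[where m=16 and d=5 and T="(5441/50000)"]) (use p1 in \<open>simp_all add: power_divide\<close>)
  have bH: "Fp p 4 1 \<le> (100369/25000)"
    by (rule Fp_upper_at[where m=16 and d=5 and T="(237/20000)"]) (use p1 in \<open>simp_all add: power_divide\<close>)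
  have bA: "5 \<le> Fp p 5 2" by (rule Fp_ge) (use p0 in auto)
  have bB: "5 \<le> Fp p 5 1" by (rule Fp_ge) (use p0 in auto)
  have bC: "2 \<le> Fp p 2 2" by (rule Fp_ge) (use p0 in auto)
  have p2': "p \<ge> 2" using p1 by simp
  have bBu: "Fp p 5 1 \<le> 6" by (rule Fp_le_2) (use p2' in auto)
  have bCu: "Fp p 2 2 \<le> 3" by (rule Fp_le_2) (use p2' in auto)
  show ?thesis
    by (rule main_crit[where E="(62093/12500)" and G="(413123/100000)" and H="(100369/25000)" and Q="(413123/100000)" and R="(100369/25000)" and U="12" and \<beta>=1 and A="5" and B="5" and C="2" and Bu=6 and Cu=3])
       (use bE bG bH bA bB bC bBu bCu in \<open>simp_all add: power2_eq_square\<close>)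
qed

lemma n7_case:
  assumes p2: "p \<ge> 2"
  shows "rho (sombor_mat p 7 (B3_adj 7)) < rho (sombor_mat p 7 (B2_adj 7))"
proof -
  have p0: "p > 0" using p2 by simp
  have bE: "Fp p 5 4 \<le> (1601/250)" by (rule Fp_le_2) (use p2 in \<open>simp_all add: power2_eq_square\<close>)
  have bG: "Fp p 5 2 \<le> (2693/500)" by (rule Fp_le_2) (use p2 in \<open>simp_all add: power2_eq_square\<close>)
  have bH: "Fp p 5 1 \<le> (51/10)" by (rule Fp_le_2) (use p2 in \<open>simp_all add: power2_eq_square\<close>)
  have bQ: "Fp p 4 2 \<le> (4473/1000)" by (rule Fp_le_2) (use p2 in \<open>simp_all add: power2_eq_square\<close>)
  have bR: "Fp p 4 1 \<le> (1031/250)" by (rule Fp_le_2) (use p2 in \<open>simp_all add: power2_eq_square\<close>)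
  have bBu: "Fp p 6 1 \<le> (6083/1000)" by (rule Fp_le_2) (use p2 in \<open>simp_all add: power2_eq_square\<close>)
  have bCu: "Fp p 2 2 \<le> 3" by (rule Fp_le_2) (use p2 in \<open>simp_all add: power2_eq_square\<close>)
  have bA: "6 \<le> Fp p 6 2" by (rule Fp_ge) (use p0 in auto)
  have bB: "6 \<le> Fp p 6 1" by (rule Fp_ge) (use p0 in auto)
  have bC: "2 \<le> Fp p 2 2" by (rule Fp_ge) (use p0 in auto)
  show ?thesis
    by (rule main_crit[where E="(1601/250)" and G="(2693/500)" and H="(51/10)" and Q="(4473/1000)" and R="(1031/250)" and U="(1523/100)" and \<beta>="(833/1000)" and A=6 and B=6 and C=2 and Bu="(6083/1000)" and Cu=3])
       (use bE bG bH bQ bR bA bB bC bBu bCu in \<open>simp_all add: power2_eq_square\<close>)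
qed

lemma n8_case:
  assumes p2: "p \<ge> 2"
  shows "rho (sombor_mat p 8 (B3_adj 8)) < rho (sombor_mat p 8 (B2_adj 8))"
proof -
  have p0: "p > 0" using p2 by simp
  have bE: "Fp p 6 4 \<le> (1803/250)" by (rule Fp_le_2) (use p2 in \<open>simp_all add: power2_eq_square\<close>)
  have bG: "Fp p 6 2 \<le> (253/40)" by (rule Fp_le_2) (use p2 in \<open>simp_all add: power2_eq_square\<close>)
  have bH: "Fp p 6 1 \<le> (6083/1000)" by (rule Fp_le_2) (use p2 in \<open>simp_all add: power2_eq_square\<close>)
  have bQ: "Fp p 4 2 \<le> (4473/1000)" by (rule Fp_le_2) (use p2 in \<open>simp_all add: power2_eq_square\<close>)
  have bR: "Fp p 4 1 \<le> (1031/250)" by (rule Fp_le_2) (use p2 in \<open>simp_all add: power2_eq_square\<close>)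
  have bBu: "Fp p 7 1 \<le> (884/125)" by (rule Fp_le_2) (use p2 in \<open>simp_all add: power2_eq_square\<close>)
  have bCu: "Fp p 2 2 \<le> 3" by (rule Fp_le_2) (use p2 in \<open>simp_all add: power2_eq_square\<close>)
  have bA: "7 \<le> Fp p 7 2" by (rule Fp_ge) (use p0 in auto)
  have bB: "7 \<le> Fp p 7 1" by (rule Fp_ge) (use p0 in auto)
  have bC: "2 \<le> Fp p 2 2" by (rule Fp_ge) (use p0 in auto)
  show ?thesis
    by (rule main_crit[where E="(1803/250)" and G="(253/40)" and H="(6083/1000)" and Q="(4473/1000)" and R="(1031/250)" and U="(359/20)" and \<beta>="(877/1250)" and A=7 and B=7 and C=2 and Bu="(884/125)" and Cu=3])
       (use bE bG bH bQ bR bA bB bC bBu bCu in \<open>simp_all add: power2_eq_square\<close>)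
qed

lemma n9_case:
  assumes p2: "p \<ge> 2"
  shows "rho (sombor_mat p 9 (B3_adj 9)) < rho (sombor_mat p 9 (B2_adj 9))"
proof -
  have p0: "p > 0" using p2 by simp
  have bE: "Fp p 7 4 \<le> (8063/1000)" by (rule Fp_le_2) (use p2 in \<open>simp_all add: power2_eq_square\<close>)
  have bG: "Fp p 7 2 \<le> (7281/1000)" by (rule Fp_le_2) (use p2 in \<open>simp_all add: power2_eq_square\<close>)
  have bH: "Fp p 7 1 \<le> (884/125)" by (rule Fp_le_2) (use p2 in \<open>simp_all add: power2_eq_square\<close>)
  have bQ: "Fp p 4 2 \<le> (4473/1000)" by (rule Fp_le_2) (use p2 in \<open>simp_all add: power2_eq_square\<close>)
  have bR: "Fp p 4 1 \<le> (1031/250)" by (rule Fp_le_2) (use p2 in \<open>simp_all add: power2_eq_square\<close>)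
  have bBu: "Fp p 8 1 \<le> (8063/1000)" by (rule Fp_le_2) (use p2 in \<open>simp_all add: power2_eq_square\<close>)
  have bCu: "Fp p 2 2 \<le> 3" by (rule Fp_le_2) (use p2 in \<open>simp_all add: power2_eq_square\<close>)
  have bA: "8 \<le> Fp p 8 2" by (rule Fp_ge) (use p0 in auto)
  have bB: "8 \<le> Fp p 8 1" by (rule Fp_ge) (use p0 in auto)
  have bC: "2 \<le> Fp p 2 2" by (rule Fp_ge) (use p0 in auto)
  show ?thesis
    by (rule main_crit[where E="(8063/1000)" and G="(7281/1000)" and H="(884/125)" and Q="(4473/1000)" and R="(1031/250)" and U="(2119/100)" and \<beta>="(6021/10000)" and A=8 and B=8 and C=2 and Bu="(8063/1000)" and Cu=3])
       (use bE bG bH bQ bR bA bB bC bBu bCu in \<open>simp_all add: power2_eq_square\<close>)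
qed

lemma n10_case:
  assumes p2: "p \<ge> 2"
  shows "rho (sombor_mat p 10 (B3_adj 10)) < rho (sombor_mat p 10 (B2_adj 10))"
proof -
  have p0: "p > 0" using p2 by simp
  have bE: "Fp p 8 4 \<le> (1789/200)" by (rule Fp_le_2) (use p2 in \<open>simp_all add: power2_eq_square\<close>)
  have bG: "Fp p 8 2 \<le> (8247/1000)" by (rule Fp_le_2) (use p2 in \<open>simp_all add: power2_eq_square\<close>)
  have bH: "Fp p 8 1 \<le> (8063/1000)" by (rule Fp_le_2) (use p2 in \<open>simp_all add: power2_eq_square\<close>)
  have bQ: "Fp p 4 2 \<le> (4473/1000)" by (rule Fp_le_2) (use p2 in \<open>simp_all add: power2_eq_square\<close>)
  have bR: "Fp p 4 1 \<le> (1031/250)" by (rule Fp_le_2) (use p2 in \<open>simp_all add: power2_eq_square\<close>)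
  have bBu: "Fp p 9 1 \<le> (1132/125)" by (rule Fp_le_2) (use p2 in \<open>simp_all add: power2_eq_square\<close>)
  have bCu: "Fp p 2 2 \<le> 3" by (rule Fp_le_2) (use p2 in \<open>simp_all add: power2_eq_square\<close>)
  have bA: "9 \<le> Fp p 9 2" by (rule Fp_ge) (use p0 in auto)
  have bB: "9 \<le> Fp p 9 1" by (rule Fp_ge) (use p0 in auto)
  have bC: "2 \<le> Fp p 2 2" by (rule Fp_ge) (use p0 in auto)
  show ?thesis
    by (rule main_crit[where E="(1789/200)" and G="(8247/1000)" and H="(8063/1000)" and Q="(4473/1000)" and R="(1031/250)" and U="(1243/50)" and \<beta>="(66/125)" and A=9 and B=9 and C=2 and Bu="(1132/125)" and Cu=3])
       (use bE bG bH bQ bR bA bB bC bBu bCu in \<open>simp_all add: power2_eq_square\<close>)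
qed

lemma n11_case:
  assumes p2: "p \<ge> 2"
  shows "rho (sombor_mat p 11 (B3_adj 11)) < rho (sombor_mat p 11 (B2_adj 11))"
proof -
  have p0: "p > 0" using p2 by simp
  have bE: "Fp p 9 4 \<le> (9849/1000)" by (rule Fp_le_2) (use p2 in \<open>simp_all add: power2_eq_square\<close>)
  have bG: "Fp p 9 2 \<le> (461/50)" by (rule Fp_le_2) (use p2 in \<open>simp_all add: power2_eq_square\<close>)
  have bH: "Fp p 9 1 \<le> (1132/125)" by (rule Fp_le_2) (use p2 in \<open>simp_all add: power2_eq_square\<close>)
  have bQ: "Fp p 4 2 \<le> (4473/1000)" by (rule Fp_le_2) (use p2 in \<open>simp_all add: power2_eq_square\<close>)
  have bR: "Fp p 4 1 \<le> (1031/250)" by (rule Fp_le_2) (use p2 in \<open>simp_all add: power2_eq_square\<close>)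
  have bBu: "Fp p 10 1 \<le> (201/20)" by (rule Fp_le_2) (use p2 in \<open>simp_all add: power2_eq_square\<close>)
  have bCu: "Fp p 2 2 \<le> 3" by (rule Fp_le_2) (use p2 in \<open>simp_all add: power2_eq_square\<close>)
  have bA: "10 \<le> Fp p 10 2" by (rule Fp_ge) (use p0 in auto)
  have bB: "10 \<le> Fp p 10 1" by (rule Fp_ge) (use p0 in auto)
  have bC: "2 \<le> Fp p 2 2" by (rule Fp_ge) (use p0 in auto)
  show ?thesis
    by (rule main_crit[where E="(9849/1000)" and G="(461/50)" and H="(1132/125)" and Q="(4473/1000)" and R="(1031/250)" and U="(723/25)" and \<beta>="(2357/5000)" and A=10 and B=10 and C=2 and Bu="(201/20)" and Cu=3])
       (use bE bG bH bQ bR bA bB bC bBu bCu in \<open>simp_all add: power2_eq_square\<close>)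
qed

lemma n12_case:
  assumes p2: "p \<ge> 2"
  shows "rho (sombor_mat p 12 (B3_adj 12)) < rho (sombor_mat p 12 (B2_adj 12))"
proof -
  have p0: "p > 0" using p2 by simp
  have bE: "Fp p 10 4 \<le> (10771/1000)" by (rule Fp_le_2) (use p2 in \<open>simp_all add: power2_eq_square\<close>)
  have bG: "Fp p 10 2 \<le> (10199/1000)" by (rule Fp_le_2) (use p2 in \<open>simp_all add: power2_eq_square\<close>)
  have bH: "Fp p 10 1 \<le> (201/20)" by (rule Fp_le_2) (use p2 in \<open>simp_all add: power2_eq_square\<close>)
  have bQ: "Fp p 4 2 \<le> (4473/1000)" by (rule Fp_le_2) (use p2 in \<open>simp_all add: power2_eq_square\<close>)
  have bR: "Fp p 4 1 \<le> (1031/250)" by (rule Fp_le_2) (use p2 in \<open>simp_all add: power2_eq_square\<close>)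
  have bBu: "Fp p 11 1 \<le> (5523/500)" by (rule Fp_le_2) (use p2 in \<open>simp_all add: power2_eq_square\<close>)
  have bCu: "Fp p 2 2 \<le> 3" by (rule Fp_le_2) (use p2 in \<open>simp_all add: power2_eq_square\<close>)
  have bA: "11 \<le> Fp p 11 2" by (rule Fp_ge) (use p0 in auto)
  have bB: "11 \<le> Fp p 11 1" by (rule Fp_ge) (use p0 in auto)
  have bC: "2 \<le> Fp p 2 2" by (rule Fp_ge) (use p0 in auto)
  show ?thesis
    by (rule main_crit[where E="(10771/1000)" and G="(10199/1000)" and H="(201/20)" and Q="(4473/1000)" and R="(1031/250)" and U="(3329/100)" and \<beta>="(4279/10000)" and A=11 and B=11 and C=2 and Bu="(5523/500)" and Cu=3])
       (use bE bG bH bQ bR bA bB bC bBu bCu in \<open>simp_all add: power2_eq_square\<close>)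
qed


lemma n6_case:
  fixes p :: real
  assumes p: "p \<ge> 2"
  shows "rho (sombor_mat p 6 (B3_adj 6)) < rho (sombor_mat p 6 (B2_adj 6))"
proof -
  consider "p \<le> 41/20" | "41/20 \<le> p \<and> p \<le> 43/20" | "43/20 \<le> p \<and> p \<le> 23/10"
    | "23/10 \<le> p \<and> p \<le> 51/20" | "51/20 \<le> p \<and> p \<le> 16/5" | "16/5 \<le> p" by linarith
  then show ?thesis
  proof cases
    case 1 thus ?thesis using n6_case0[of p] p by simp
  next
    case 2 thus ?thesis using n6_case1[of p] by simp
  next
    case 3 thus ?thesis using n6_case2[of p] by simp
  next
    case 4 thus ?thesis using n6_case3[of p] by simp
  next
    case 5 thus ?thesis using n6_case4[of p] by simp
  next
    case 6 thus ?thesis using n6_case5[of p] by simp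
  qed
qed

theorem lemma5p2:
  fixes n :: nat and p :: real
  assumes "n \<ge> 6" and "p \<ge> 2"
  shows "rho (sombor_mat p n (B3_adj n)) < rho (sombor_mat p n (B2_adj n))"
proof -
  consider "n = 6" | "n = 7" | "n = 8" | "n = 9" | "n = 10" | "n = 11" | "n = 12" | "n \<ge> 13"
    using assms(1) by linarith
  then show ?thesis
  proof cases
    case 1 thus ?thesis using n6_case[OF assms(2)] by simp
  next
    case 2 thus ?thesis using n7_case[OF assms(2)] by simp
  next
    case 3 thus ?thesis using n8_case[OF assms(2)] by simp
  next
    case 4 thus ?thesis using n9_case[OF assms(2)] by simp
  next
    case 5 thus ?thesis using n10_case[OF assms(2)] by simp
  next
    case 6 thus ?thesis using n11_case[OF assms(2)] by simp
  next
    case 7 thus ?thesis using n12_case[OF assms(2)] by simp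
  next
    case 8 thus ?thesis using big_case[OF _ assms(2)] by simp
  qed
qed

end
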